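(* Let $0<\eta\le\gamma$ and let $c$ satisfy \[ 0\le c\le\frac{\sqrt{2|2\eta-\gamma|+\gamma^2+1}-|2\eta-\gamma|-1}{4\eta^2}. \] Let $\epsilon\in[-1,1]$ and let $x$ be a random variable with values in $[-1,1]$ such that $\mathbb E[e^{-\gamma x}]\le e^{\gamma\epsilon}$. Then \[ \mathbb E\big[e^{c\eta^2x^2-\eta x}\big]\;\le\;e^{c\eta^2\epsilon^2+\eta\epsilon}. \] *)

theory Defs
  imports "HOL-Probability.Probability"
begin

end

theory Submission imports Defs begin

lemma keyw:
  fixes \<eta> \<gamma> c :: real
  assumes "0 < \<eta>" "\<eta> \<le> \<gamma>" "0 \<le> c"
    and "c \<le> (sqrt (2 * \<bar>2 * \<eta> - \<gamma>\<bar> + \<gamma>\<^sup>2 + 1) - \<bar>2 * \<eta> - \<gamma>\<bar> - 1) / (4 * \<eta>\<^sup>2)"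
  shows "(4*c*\<eta>^2)^2 + 2*(4*c*\<eta>^2)*(1 + \<bar>2 * \<eta> - \<gamma>\<bar>) \<le> 4*\<eta>*(\<gamma>-\<eta>)"
proof -
  define w where "w = 4*c*\<eta>^2"
  define b where "b = \<bar>2 * \<eta> - \<gamma>\<bar>"
  have w0: "w \<ge> 0" using assms unfolding w_def by simp
  have "w \<le> sqrt (2 * b + \<gamma>\<^sup>2 + 1) - b - 1"
    using assms(4) assms(1) unfolding w_def b_def by (simp add: field_simps)
  hence s1: "w + b + 1 \<le> sqrt (2 * b + \<gamma>\<^sup>2 + 1)" by simp
  moreover have s2: "0 \<le> w + b + 1" using w0 b_def by simp
  ultimately have "(w + b + 1)^2 \<le> 2 * b + \<gamma>\<^sup>2 + 1"
  proof -
    have Q: "0 \<le> 2 * b + \<gamma>\<^sup>2 + 1" using b_def by simp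
    have "(w + b + 1)^2 \<le> (sqrt (2 * b + \<gamma>\<^sup>2 + 1))^2"
      using s1 s2 by (intro power_mono) auto
    thus ?thesis using Q by simp
  qed
  moreover have "b^2 = (2*\<eta>-\<gamma>)^2" unfolding b_def by simp
  ultimately show ?thesis unfolding w_def[symmetric] b_def[symmetric]
    by (simp add: power2_eq_square algebra_simps)
qed

lemma keyP:
  fixes \<eta> \<gamma> c x :: real
  assumes "0 < \<eta>" "\<eta> \<le> \<gamma>" "0 \<le> c"
    and "c \<le> (sqrt (2 * \<bar>2 * \<eta> - \<gamma>\<bar> + \<gamma>\<^sup>2 + 1) - \<bar>2 * \<eta> - \<gamma>\<bar> - 1) / (4 * \<eta>\<^sup>2)"
    and "\<bar>x\<bar> \<le> 1"
  shows "(4*c*\<eta>^2)^2*x^2 + 2*(4*c*\<eta>^2) + 2*(4*c*\<eta>^2)*x*(\<gamma>-2*\<eta>) - 4*\<eta>*(\<gamma>-\<eta>) \<le> 0"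
proof -
  define w where "w = 4*c*\<eta>^2"
  have w0: "w \<ge> 0" using assms unfolding w_def by simp
  have k: "w^2 + 2*w*(1 + \<bar>2 * \<eta> - \<gamma>\<bar>) \<le> 4*\<eta>*(\<gamma>-\<eta>)" using keyw[OF assms(1-4)] w_def by simp
  have "x^2 \<le> 1" using assms(5) by (simp add: abs_square_le_1)
  hence a: "w^2*x^2 \<le> w^2" by (simp add: mult_left_le)
  have "x*(\<gamma>-2*\<eta>) \<le> \<bar>2 * \<eta> - \<gamma>\<bar>"
  proof -
    have "x*(\<gamma>-2*\<eta>) \<le> \<bar>x\<bar>*\<bar>\<gamma>-2*\<eta>\<bar>" by (metis abs_ge_self abs_mult)
    also have "\<dots> \<le> \<bar>\<gamma>-2*\<eta>\<bar>" using assms(5) by (simp add: mult_left_le_one_le)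
    finally show ?thesis by (simp add: abs_minus_commute)
  qed
  hence b: "w*(x*(\<gamma>-2*\<eta>)) \<le> w*\<bar>2 * \<eta> - \<gamma>\<bar>" using w0 by (simp add: mult_left_mono)
  show ?thesis using a b k unfolding w_def[symmetric] by (simp add: algebra_simps)
qed

lemma bnd:
  fixes g x :: real
  assumes "0 \<le> g" "-1 \<le> x" "x \<le> 1"
  shows "-g \<le> g*x" "g*x \<le> g" "-g \<le> -g*x" "-g*x \<le> g"
proof -
  have "g*(-1) \<le> g*x" "g*x \<le> g*1" using assms by (intro mult_left_mono; simp)+
  thus "-g \<le> g*x" "g*x \<le> g" "-g \<le> -g*x" "-g*x \<le> g" by auto
qed

lemma tangent:
  fixes \<gamma> A B y y1 :: real
  assumes g: "0 < \<gamma>"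
    and P: "\<And>t. -\<gamma> \<le> t \<Longrightarrow> t \<le> \<gamma> \<Longrightarrow> (2*A*t+B)^2 + 2*A - (2*A*t+B) \<le> 0"
    and y: "y \<in> {exp (-\<gamma>)..exp \<gamma>}" and y1: "y1 \<in> {exp (-\<gamma>)..exp \<gamma>}"
  shows "exp (A*(ln y)^2 + B*ln y) - exp (A*(ln y1)^2 + B*ln y1)
     \<le> exp (A*(ln y1)^2 + B*ln y1) * (2*A*ln y1 + B) / y1 * (y - y1)"
proof -
  let ?C = "{exp (-\<gamma>)..exp \<gamma>}"
  define hh where "hh y = exp (A*(ln y)^2 + B*ln y)" for y
  define h1 where "h1 y = hh y * (2*A*ln y + B) / y" for y
  define h2 where "h2 y = hh y * ((2*A*ln y + B)^2 + 2*A - (2*A*ln y + B)) / y^2" for y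
  have pos: "y > 0" if "y \<in> ?C" for y using that by (auto intro: less_le_trans[OF exp_gt_zero])
  have d1: "((\<lambda>y. - hh y) has_real_derivative - h1 y) (at y)" if "y \<in> ?C" for y
    using pos[OF that] unfolding hh_def h1_def
    by (auto intro!: derivative_eq_intros simp: field_simps power2_eq_square)
  have d2: "((\<lambda>y. - h1 y) has_real_derivative - h2 y) (at y)" if "y \<in> ?C" for y
  proof -
    have "((\<lambda>y. hh y * (2*A*ln y + B) / y) has_real_derivative h2 y) (at y)"
      using pos[OF that] unfolding hh_def h2_def
      by (auto intro!: derivative_eq_intros simp: field_simps power2_eq_square)
    thus ?thesis unfolding h1_def by (rule DERIV_minus)
  qed
  have n2: "- h2 y \<ge> 0" if "y \<in> ?C" for y
  proof -
    have "ln y \<ge> -\<gamma>" using that pos[OF that] by (auto simp: ln_ge_iff)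
    moreover have "ln y \<le> \<gamma>" using that pos[OF that]
      by (metis atLeastAtMost_iff exp_gt_zero ln_exp ln_le_cancel_iff)
    ultimately have "(2*A*ln y + B)^2 + 2*A - (2*A*ln y + B) \<le> 0" using P by auto
    hence "h2 y \<le> 0" unfolding h2_def hh_def
      by (intro divide_nonpos_pos mult_nonneg_nonpos) (use pos[OF that] in auto)
    thus ?thesis by simp
  qed
  have "- h1 y1 * (y - y1) \<le> - hh y - - hh y1"
    by (rule f''_imp_f'[of ?C "\<lambda>y. - hh y" "\<lambda>y. - h1 y" "\<lambda>y. - h2 y"])
       (use d1 d2 n2 y y1 in auto)
  thus ?thesis unfolding h1_def hh_def by simp
qed

theorem mainTheorem12:
  fixes M :: "'a measure" and X :: "'a \<Rightarrow> real"
    and \<eta> \<gamma> c \<epsilon> :: real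
  assumes "prob_space M"
    and "X \<in> borel_measurable M"
    and "AE \<omega> in M. X \<omega> \<in> {-1..1}"
    and "0 < \<eta>" and "\<eta> \<le> \<gamma>"
    and "0 \<le> c"
    and "c \<le> (sqrt (2 * \<bar>2 * \<eta> - \<gamma>\<bar> + \<gamma>\<^sup>2 + 1) - \<bar>2 * \<eta> - \<gamma>\<bar> - 1) / (4 * \<eta>\<^sup>2)"
    and "\<epsilon> \<in> {-1..1}"
    and "prob_space.expectation M (\<lambda>\<omega>. exp (- \<gamma> * X \<omega>)) \<le> exp (\<gamma> * \<epsilon>)"
  shows "prob_space.expectation M (\<lambda>\<omega>. exp (c * \<eta>\<^sup>2 * (X \<omega>)\<^sup>2 - \<eta> * X \<omega>))
           \<le> exp (c * \<eta>\<^sup>2 * \<epsilon>\<^sup>2 + \<eta> * \<epsilon>)"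
proof -
  interpret prob_space M by fact
  have g: "0 < \<gamma>" using assms(4,5) by simp
  define A where "A = c*\<eta>^2/\<gamma>^2"
  define B where "B = \<eta>/\<gamma>"
  have A0: "A \<ge> 0" unfolding A_def using assms(6) by simp
  have P: "(2*A*t+B)^2 + 2*A - (2*A*t+B) \<le> 0" if "-\<gamma> \<le> t" "t \<le> \<gamma>" for t
  proof -
    have x: "\<bar>-t/\<gamma>\<bar> \<le> 1" using that g by (simp add: abs_le_iff field_simps)
    have e: "((2*A*t+B)^2 + 2*A - (2*A*t+B)) * (4*\<gamma>^2) =
      (4*c*\<eta>^2)^2*(-t/\<gamma>)^2 + 2*(4*c*\<eta>^2) + 2*(4*c*\<eta>^2)*(-t/\<gamma>)*(\<gamma>-2*\<eta>) - 4*\<eta>*(\<gamma>-\<eta>)"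
      unfolding A_def B_def using g by (simp add: field_simps power2_eq_square)
    have "((2*A*t+B)^2 + 2*A - (2*A*t+B)) * (4*\<gamma>^2) \<le> 0"
      unfolding e using keyP[OF assms(4,5,6,7) x] .
    thus ?thesis using g by (simp add: mult_le_0_iff)
  qed
  define y1 where "y1 = exp (\<gamma>*\<epsilon>)"
  have y1C: "y1 \<in> {exp (-\<gamma>)..exp \<gamma>}" using assms(8) g bnd[of \<gamma> \<epsilon>] unfolding y1_def by auto
  define K where "K = exp (A*(ln y1)^2 + B*ln y1)"
  define D where "D = K * (2*A*ln y1 + B) / y1"
  have lny1: "ln y1 = \<gamma>*\<epsilon>" unfolding y1_def by simp
  have K: "K = exp (c * \<eta>\<^sup>2 * \<epsilon>\<^sup>2 + \<eta> * \<epsilon>)"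
    unfolding K_def lny1 A_def B_def using g by (simp add: field_simps power2_eq_square)
  have D0: "D \<ge> 0"
  proof -
    have "-\<gamma> \<le> ln y1" "ln y1 \<le> \<gamma>" unfolding lny1 using assms(8) g bnd[of \<gamma> \<epsilon>] by auto
    hence "(2*A*ln y1+B)^2 \<le> (2*A*ln y1+B)" using P A0 by fastforce
    hence "2*A*ln y1+B \<ge> 0" by (metis le_less_trans not_le zero_le_power2)
    thus ?thesis unfolding D_def K_def y1_def by simp
  qed
  have pw: "AE \<omega> in M. exp (c * \<eta>\<^sup>2 * (X \<omega>)\<^sup>2 - \<eta> * X \<omega>) \<le> K + D * (exp (- \<gamma> * X \<omega>) - y1)"
    using assms(3)
  proof eventually_elim
    case (elim \<omega>)
    let ?y = "exp (- \<gamma> * X \<omega>)"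
    have yC: "?y \<in> {exp (-\<gamma>)..exp \<gamma>}" using elim g bnd[of \<gamma> "X \<omega>"] by auto
    have "exp (A*(ln ?y)^2 + B*ln ?y) - K \<le> D * (?y - y1)"
      using tangent[OF g P yC y1C] unfolding K_def D_def by simp
    moreover have "exp (A*(ln ?y)^2 + B*ln ?y) = exp (c * \<eta>\<^sup>2 * (X \<omega>)\<^sup>2 - \<eta> * X \<omega>)"
      unfolding A_def B_def using g by (simp add: field_simps power2_eq_square)
    ultimately show ?case by simp
  qed
  have i1: "integrable M (\<lambda>\<omega>. exp (- \<gamma> * X \<omega>))"
  proof (rule integrable_const_bound[where B="exp \<gamma>"])
    show "AE \<omega> in M. norm (exp (- \<gamma> * X \<omega>)) \<le> exp \<gamma>"
      using assms(3) by eventually_elim (use g bnd[of \<gamma>] in auto)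
  qed (use assms(2) in measurable)
  have i2: "integrable M (\<lambda>\<omega>. exp (c * \<eta>\<^sup>2 * (X \<omega>)\<^sup>2 - \<eta> * X \<omega>))"
  proof (rule integrable_const_bound[where B="exp (c * \<eta>\<^sup>2 + \<eta>)"])
    show "AE \<omega> in M. norm (exp (c * \<eta>\<^sup>2 * (X \<omega>)\<^sup>2 - \<eta> * X \<omega>)) \<le> exp (c * \<eta>\<^sup>2 + \<eta>)"
      using assms(3)
    proof eventually_elim
      case (elim \<omega>)
      have "(X \<omega>)^2 \<le> 1" using elim by (simp add: abs_square_le_1 abs_le_iff)
      hence "c * \<eta>\<^sup>2 * (X \<omega>)\<^sup>2 \<le> c * \<eta>\<^sup>2" using assms(6) by (simp add: mult_left_le)
      moreover have "- \<eta> * X \<omega> \<le> \<eta>" using elim assms(4) bnd[of \<eta> "X \<omega>"] by auto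
      ultimately show ?case by simp
    qed
  qed (use assms(2) in measurable)
  have "expectation (\<lambda>\<omega>. exp (c * \<eta>\<^sup>2 * (X \<omega>)\<^sup>2 - \<eta> * X \<omega>))
        \<le> expectation (\<lambda>\<omega>. K + D * (exp (- \<gamma> * X \<omega>) - y1))"
    by (rule integral_mono_AE[OF i2 _ pw]) (use i1 in auto)
  also have "\<dots> = K + D * (expectation (\<lambda>\<omega>. exp (- \<gamma> * X \<omega>)) - y1)"
    using i1 by (simp add: prob_space)
  also have "\<dots> \<le> K" using D0 assms(9) unfolding y1_def by (simp add: mult_nonneg_nonpos)
  finally show ?thesis unfolding K .
qed
end
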